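(* Let $\mathcal F$ be a family of finite ordered graphs and let $\mathrm{Forb}^+_{T_{\mathrm{Graph}}\cup T_{\mathrm{LinOrder}}}(\mathcal F)$ be the theory of all ordered graphs that contain no non-induced copy of any member of $\mathcal F$. For the axiom-adding interpretation $I^<_{\mathcal F}\colon T_{\mathrm{Graph}}\leadsto\mathrm{Forb}^+_{T_{\mathrm{Graph}}\cup T_{\mathrm{LinOrder}}}(\mathcal F)$ (acting identically on $E$, so $I^<_{\mathcal F}(N)$ is the graph part of $N$), we have $$\chi(I^<_{\mathcal F})=\max\{\chi_<(\mathcal F),1\},$$ where $\chi_<(\mathcal F)=\inf\{\chi_<(F):F\in\mathcal F\}$ (with $\inf\varnothing=\infty$).
   Context: An ordered graph is a finite simple graph together with a strict linear order $<$ on its vertex set. An ordered graph $G$ contains a non-induced copy of an ordered graph $F$ if there is an injection $V(F)\to V(G)$ that preserves the order and maps edges to edges. A proper interval coloring of an ordered graph $G$ is a map $f\colon V(G)\to[\ell]$ that is a proper coloring of the graph (adjacent vertices get distinct colors) and whose color classes are intervals of the order (if $u<v<w$ and $f(u)=f(w)$ then $f(v)=f(u)$). The interval chromatic number $\chi_<(G)$ is the least $\ell$ admitting a proper interval coloring $f\colon V(G)\to[\ell]$. For an open interpretation $I\colon T_{\mathrm{Graph}}\leadsto T$, $\chi(I)=\sup(\{\ell\in\mathbb{N}_+:\forall n\in\mathbb{N}\ \exists N\in\mathcal M_n[T],\ T_{n,\ell}\subseteq I(N)\}\cup\{0\})+1$, where $\mathcal M_n[T]$ is the set of $n$-vertex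 models of $T$ up to isomorphism, $T_{n,\ell}$ the complete $\ell$-partite graph on $n$ vertices with parts of sizes $\lfloor n/\ell\rfloor$ or $\lceil n/\ell\rceil$, and $G\subseteq H$ means an injection mapping edges to edges. *)

theory Defs
  imports Main "HOL-Library.Extended_Nat"
begin

text \<open>A finite ordered graph with k vertices is represented (up to isomorphism)
  on the vertex set {0..<k} with the natural order of nat; the edge relation
  is symmetric, irreflexive and lives on {0..<k}.\<close>

definition ordered_graph :: "nat \<Rightarrow> (nat \<Rightarrow> nat \<Rightarrow> bool) \<Rightarrow> bool" where
  "ordered_graph k E \<longleftrightarrow> (\<forall>u v. E u v \<longrightarrow> u < k \<and> v < k \<and> u \<noteq> v \<and> E v u)"

definition contains_ordered :: "nat \<Rightarrow> (nat \<Rightarrow> nat \<Rightarrow> bool) \<Rightarrow> nat \<Rightarrow> (nat \<Rightarrow> nat \<Rightarrow> bool) \<Rightarrow> bool" where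
  "contains_ordered n E k EF \<longleftrightarrow>
     (\<exists>g. strict_mono_on {0..<k} g \<and> g ` {0..<k} \<subseteq> {0..<n} \<and>
          (\<forall>u<k. \<forall>v<k. EF u v \<longrightarrow> E (g u) (g v)))"

definition forb_model :: "(nat \<times> (nat \<Rightarrow> nat \<Rightarrow> bool)) set \<Rightarrow> nat \<Rightarrow> (nat \<Rightarrow> nat \<Rightarrow> bool) \<Rightarrow> bool" where
  "forb_model \<F> n E \<longleftrightarrow> ordered_graph n E \<and> (\<forall>(k, EF) \<in> \<F>. \<not> contains_ordered n E k EF)"

text \<open>Graph G=(n,E) contains (as a not necessarily induced subgraph) the balanced complete
  l-partite graph T_{n,l}: there is a partition p of {0..<n} into l parts of sizes
  floor(n/l) or ceil(n/l), and an injection f into the vertices of G mapping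
  every pair of vertices in different parts to an edge.\<close>
definition contains_turan :: "nat \<Rightarrow> nat \<Rightarrow> (nat \<Rightarrow> nat \<Rightarrow> bool) \<Rightarrow> bool" where
  "contains_turan n l E \<longleftrightarrow>
     (\<exists>p f. (\<forall>i<n. p i < l) \<and>
            (\<forall>j<l. card {i. i < n \<and> p i = j} \<in> {n div l, (n + l - 1) div l}) \<and>
            inj_on f {0..<n} \<and> f ` {0..<n} \<subseteq> {0..<n} \<and>
            (\<forall>u<n. \<forall>v<n. p u \<noteq> p v \<longrightarrow> E (f u) (f v)))"

definition chi_interp :: "(nat \<times> (nat \<Rightarrow> nat \<Rightarrow> bool)) set \<Rightarrow> enat" where
  "chi_interp \<F> =
     Sup ({enat l | l. l \<ge> 1 \<and> (\<forall>n. \<exists>E. forb_model \<F> n E \<and> contains_turan n l E)} \<union> {0}) + 1"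

definition proper_interval_coloring :: "nat \<Rightarrow> (nat \<Rightarrow> nat \<Rightarrow> bool) \<Rightarrow> nat \<Rightarrow> (nat \<Rightarrow> nat) \<Rightarrow> bool" where
  "proper_interval_coloring k E l f \<longleftrightarrow>
     (\<forall>i<k. f i \<in> {1..l}) \<and>
     (\<forall>u<k. \<forall>v<k. E u v \<longrightarrow> f u \<noteq> f v) \<and>
     (\<forall>u v w. u < v \<and> v < w \<and> w < k \<and> f u = f w \<longrightarrow> f v = f u)"

definition interval_chromatic_number :: "nat \<Rightarrow> (nat \<Rightarrow> nat \<Rightarrow> bool) \<Rightarrow> nat" where
  "interval_chromatic_number k E = (LEAST l. \<exists>f. proper_interval_coloring k E l f)"

definition interval_chromatic_family :: "(nat \<times> (nat \<Rightarrow> nat \<Rightarrow> bool)) set \<Rightarrow> enat" where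
  "interval_chromatic_family \<F> = (INF F\<in>\<F>. enat (interval_chromatic_number (fst F) (snd F)))"

end

theory Submission imports Defs begin

lemma rank_props:
  fixes key :: "nat \<Rightarrow> nat"
  assumes inj: "inj_on key {0..<n}"
  defines "f \<equiv> \<lambda>i. card {j. j < n \<and> key j < key i}"
  shows "\<forall>i<n. f i < n"
    and "\<And>i i'. i < n \<Longrightarrow> i' < n \<Longrightarrow> key i < key i' \<Longrightarrow> f i < f i'"
    and "inj_on f {0..<n}"
    and "f ` {0..<n} = {0..<n}"
proof -
  show A: "\<forall>i<n. f i < n"
  proof (intro allI impI)
    fix i assume "i < n"
    have "{j. j < n \<and> key j < key i} \<subseteq> {0..<n} - {i}" by auto
    hence "f i \<le> card ({0..<n} - {i})" unfolding f_def by (intro card_mono) auto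
    thus "f i < n" using \<open>i < n\<close> by simp
  qed
  show B: "\<And>i i'. i < n \<Longrightarrow> i' < n \<Longrightarrow> key i < key i' \<Longrightarrow> f i < f i'"
  proof -
    fix i i' assume h: "i < n" "i' < n" "key i < key i'"
    have "{j. j < n \<and> key j < key i} < {j. j < n \<and> key j < key i'}"
      using h by auto
    thus "f i < f i'" unfolding f_def by (intro psubset_card_mono) auto
  qed
  show C: "inj_on f {0..<n}"
  proof (rule inj_onI)
    fix i i' assume h: "i \<in> {0..<n}" "i' \<in> {0..<n}" "f i = f i'"
    show "i = i'"
    proof (rule ccontr)
      assume "i \<noteq> i'"
      hence "key i \<noteq> key i'" using inj h by (meson inj_on_def)
      hence "key i < key i' \<or> key i' < key i" by arith
      thus False using B h by force
    qed
  qed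
  show "f ` {0..<n} = {0..<n}"
    by (rule endo_inj_surj) (use A C in auto)
qed

lemma count_mod:
  assumes "(l::nat) > 0" "j < l"
  shows "card {i. i < n \<and> i mod l = j} = n div l + (if j < n mod l then 1 else 0)"
proof (induction n)
  case 0
  then show ?case by simp
next
  case (Suc n)
  have c: "card {i. i < Suc n \<and> i mod l = j} = card {i. i < n \<and> i mod l = j} + (if n mod l = j then 1 else 0)"
  proof (cases "n mod l = j")
    case True
    hence "{i. i < Suc n \<and> i mod l = j} = insert n {i. i < n \<and> i mod l = j}"
      by (auto simp: less_Suc_eq)
    thus ?thesis using True by simp
  next
    case False
    hence "{i. i < Suc n \<and> i mod l = j} = {i. i < n \<and> i mod l = j}"
      by (auto simp: less_Suc_eq)
    thus ?thesis using False by simp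
  qed
  have m: "Suc n mod l = (if Suc (n mod l) = l then 0 else Suc (n mod l))"
    by (simp add: mod_Suc)
  have d: "Suc n div l = (if Suc (n mod l) = l then Suc (n div l) else n div l)"
    using assms(1) unfolding div_Suc m by auto
  have "n mod l < l" using assms(1) by simp
  show ?case
    unfolding c Suc.IH m d using assms(2) \<open>n mod l < l\<close> by auto
qed

lemma turan_model:
  assumes l: "l \<ge> (1::nat)"
  shows "\<exists>E. ordered_graph n E \<and> contains_turan n l E \<and>
    (\<forall>k EF. contains_ordered n E k EF \<longrightarrow> (\<exists>col. proper_interval_coloring k EF l col))"
proof -
  define p where "p i = i mod l" for i
  define key where "key i = p i * n + i" for i
  have injk: "inj_on key {0..<n}"
  proof (rule inj_onI)
    fix i j assume h: "i \<in> {0..<n}" "j \<in> {0..<n}" "key i = key j"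
    have "(p i * n + i) mod n = i" "(p j * n + j) mod n = j" using h by simp_all
    thus "i = j" using h(3) unfolding key_def by metis
  qed
  define f where "f i = card {j. j < n \<and> key j < key i}" for i
  have fb: "\<forall>i<n. f i < n"
    and fm: "\<And>i i'. i < n \<Longrightarrow> i' < n \<Longrightarrow> key i < key i' \<Longrightarrow> f i < f i'"
    and fi: "inj_on f {0..<n}"
    and fs: "f ` {0..<n} = {0..<n}"
    using rank_props[OF injk] unfolding f_def by auto
  define q where "q x = p (inv_into {0..<n} f x)" for x
  have qf: "q (f i) = p i" if "i < n" for i
    unfolding q_def using that fi by (simp add: inv_into_f_f)
  have inv: "inv_into {0..<n} f x < n \<and> f (inv_into {0..<n} f x) = x" if "x < n" for x
    using that fs by (metis atLeastLessThan_iff f_inv_into_f inv_into_into zero_le)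
  have ql: "q x < l" if "x < n" for x
    unfolding q_def p_def using l by simp
  have qmono: "q x \<le> q y" if "x \<le> y" "y < n" for x y
  proof (rule ccontr)
    assume "\<not> q x \<le> q y"
    define i where "i = inv_into {0..<n} f x"
    define j where "j = inv_into {0..<n} f y"
    have ij: "i < n" "j < n" "f i = x" "f j = y" using inv that unfolding i_def j_def by auto
    have "p j < p i" using \<open>\<not> q x \<le> q y\<close> unfolding q_def i_def j_def by simp
    hence "key j < key i"
    proof -
      have "key j < (p j + 1) * n" unfolding key_def using ij by simp
      also have "\<dots> \<le> p i * n" using \<open>p j < p i\<close> by (intro mult_le_mono1) simp
      also have "\<dots> \<le> key i" unfolding key_def by simp
      finally show ?thesis .
    qed
    hence "f j < f i" using fm ij by blast
    thus False using ij that by simp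
  qed
  define E where "E x y = (x < n \<and> y < n \<and> q x \<noteq> q y)" for x y
  have "ordered_graph n E" unfolding ordered_graph_def E_def by auto
  moreover have "contains_turan n l E"
    unfolding contains_turan_def
  proof (intro exI conjI allI impI)
    show "p i < l" for i unfolding p_def using l by simp
    show "card {i. i < n \<and> p i = j} \<in> {n div l, (n + l - 1) div l}" if "j < l" for j
    proof -
      have c: "card {i. i < n \<and> p i = j} = n div l + (if j < n mod l then 1 else 0)"
        unfolding p_def using count_mod[of l j n] l that by simp
      have "(n + l - 1) div l = n div l + (if n mod l = 0 then 0 else 1)"
      proof -
        have e: "n + l - 1 = l * (n div l) + (n mod l + l - 1)" using l by simp
        have r: "(n mod l + l - 1) div l = (if n mod l = 0 then 0 else 1)"
        proof (cases "n mod l = 0")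
          case True then show ?thesis using l by simp
        next
          case False
          have "n mod l < l" using l by simp
          hence e2: "n mod l + l - 1 = (n mod l - 1) + l" "n mod l - 1 < l" using False by auto
          have "((n mod l - 1) + l) div l = (n mod l - 1) div l + 1"
            using l by simp
          then show ?thesis using False e2 by simp
        qed
        have "(n + l - 1) div l = (l * (n div l) + (n mod l + l - 1)) div l"
          using e by (rule arg_cong)
        also have "\<dots> = n div l + (n mod l + l - 1) div l"
          by (rule div_mult_self4) (use l in simp)
        finally show ?thesis unfolding r .
      qed
      thus ?thesis unfolding c by auto
    qed
    show "inj_on f {0..<n}" by (rule fi)
    show "f ` {0..<n} \<subseteq> {0..<n}" using fs by simp
    show "E (f u) (f v)" if "u < n" "v < n" "p u \<noteq> p v" for u v
      unfolding E_def using that fb qf by auto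
  qed
  moreover have "\<exists>col. proper_interval_coloring k EF l col" if co: "contains_ordered n E k EF" for k EF
  proof -
    have "\<exists>g. strict_mono_on {0..<k} g \<and> g ` {0..<k} \<subseteq> {0..<n} \<and>
      (\<forall>u<k. \<forall>v<k. EF u v \<longrightarrow> E (g u) (g v))"
      using co by (simp only: contains_ordered_def)
    then obtain g where g: "strict_mono_on {0..<k} g" "g ` {0..<k} \<subseteq> {0..<n}"
      "\<forall>u<k. \<forall>v<k. EF u v \<longrightarrow> E (g u) (g v)"
      by (elim exE conjE)
    have gn: "g u < n" if "u < k" for u using g(2) that by (auto simp: image_subset_iff)
    show ?thesis
      unfolding proper_interval_coloring_def
    proof (intro exI[of _ "\<lambda>u. q (g u) + 1"] conjI allI impI)
      show "q (g i) + 1 \<in> {1..l}" if "i < k" for i using ql[OF gn[OF that]] by simp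
      show "q (g u) + 1 \<noteq> q (g v) + 1" if "u < k" "v < k" "EF u v" for u v
        using g(3) that unfolding E_def by auto
      fix u v w assume h: "u < v \<and> v < w \<and> w < k \<and> q (g u) + 1 = q (g w) + 1"
      have "g u < g v" "g v < g w" using g(1) h unfolding strict_mono_on_def by auto
      moreover have "g w < n" "g v < n" using gn h by auto
      ultimately have "q (g u) \<le> q (g v)" "q (g v) \<le> q (g w)" using qmono[of "g u" "g v"] qmono[of "g v" "g w"] by auto
      thus "q (g v) + 1 = q (g u) + 1" using h by simp
    qed
  qed
  ultimately show ?thesis
    by (intro exI[of _ E]) blast
qed


lemma core:
  fixes q :: "nat \<Rightarrow> nat" and k n :: nat
  assumes k: "k \<ge> 1"
  shows "\<And>a L. finite L \<Longrightarrow> card L \<ge> m \<Longrightarrow>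
     (\<forall>c\<in>L. card {x. a \<le> x \<and> x < n \<and> q x = c} \<ge> m*k) \<Longrightarrow>
     \<exists>h pos. inj_on h {0..<m} \<and> h ` {0..<m} \<subseteq> L \<and>
        (\<forall>i<m. \<forall>j<k. a \<le> pos i j \<and> pos i j < n \<and> q (pos i j) = h i) \<and>
        (\<forall>i<m. \<forall>j<k. \<forall>j'<k. j < j' \<longrightarrow> pos i j < pos i j') \<and>
        (\<forall>i<m. \<forall>i'<m. \<forall>j<k. \<forall>j'<k. i < i' \<longrightarrow> pos i j < pos i' j')"
proof (induction m)
  case 0
  show ?case by (rule exI[of _ id], rule exI[of _ "\<lambda>i j. 0"]) auto
next
  case (Suc m a L)
  have "L \<noteq> {}" using Suc.prems(2) by auto
  then obtain c1 where c1: "c1 \<in> L" by blast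
  define S where "S t c = {x. a \<le> x \<and> x \<le> t \<and> x < n \<and> q x = c}" for t c
  have finS: "finite (S t c)" for t c unfolding S_def by (rule finite_subset[of _ "{..<n}"]) auto
  define P where "P t \<longleftrightarrow> (\<exists>c\<in>L. card (S t c) \<ge> k)" for t
  have "P n"
  proof -
    have "{x. a \<le> x \<and> x < n \<and> q x = c1} \<subseteq> S n c1" unfolding S_def by auto
    hence "card {x. a \<le> x \<and> x < n \<and> q x = c1} \<le> card (S n c1)" using finS by (intro card_mono) auto
    moreover have "Suc m * k \<le> card {x. a \<le> x \<and> x < n \<and> q x = c1}" using Suc.prems(3) c1 by blast
    moreover have "k \<le> Suc m * k" by simp
    ultimately have "k \<le> card (S n c1)" by linarith
    thus ?thesis unfolding P_def using c1 by blast
  qed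
  define t where "t = (LEAST t. P t)"
  have Pt: "P t" unfolding t_def by (rule LeastI[of P n]) (rule \<open>P n\<close>)
  then obtain c0 where c0: "c0 \<in> L" "card (S t c0) \<ge> k" unfolding P_def by blast
  have "S t c0 \<noteq> {}" using c0(2) k by auto
  hence at: "a \<le> t" unfolding S_def by auto
  have small: "card {x. a \<le> x \<and> x < t \<and> x < n \<and> q x = c} < k" if "c \<in> L" for c
  proof (cases t)
    case 0 then show ?thesis using k by simp
  next
    case (Suc t')
    have "\<not> P t'" unfolding t_def by (rule not_less_Least) (simp add: Suc t_def[symmetric])
    hence "card (S t' c) < k" using that unfolding P_def by auto
    moreover have "{x. a \<le> x \<and> x < t \<and> x < n \<and> q x = c} = S t' c" unfolding S_def Suc by auto
    ultimately show ?thesis by simp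
  qed
  have rest: "card {x. Suc t \<le> x \<and> x < n \<and> q x = c} \<ge> m*k" if "c \<in> L" for c
  proof -
    define A where "A = {x. a \<le> x \<and> x < n \<and> q x = c}"
    define S1 where "S1 = {x. a \<le> x \<and> x < t \<and> x < n \<and> q x = c}"
    define B where "B = {x. Suc t \<le> x \<and> x < n \<and> q x = c}"
    have finB: "finite B" "finite S1" unfolding B_def S1_def by (rule finite_subset[of _ "{..<n}"], auto)+
    have "A \<subseteq> (S1 \<union> {t}) \<union> B" unfolding A_def S1_def B_def by auto
    hence "card A \<le> card ((S1 \<union> {t}) \<union> B)" using finB by (intro card_mono) auto
    also have "\<dots> \<le> card (S1 \<union> {t}) + card B" by (rule card_Un_le)
    also have "\<dots> \<le> card S1 + 1 + card B" using card_Un_le[of S1 "{t}"] by simp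
    finally have "card A \<le> card S1 + 1 + card B" .
    moreover have "card S1 < k" unfolding S1_def using small that by blast
    moreover have "card A \<ge> Suc m * k" unfolding A_def using Suc.prems(3) that by blast
    ultimately show ?thesis unfolding B_def by simp
  qed
  have "\<exists>h pos. inj_on h {0..<m} \<and> h ` {0..<m} \<subseteq> L - {c0} \<and>
        (\<forall>i<m. \<forall>j<k. Suc t \<le> pos i j \<and> pos i j < n \<and> q (pos i j) = h i) \<and>
        (\<forall>i<m. \<forall>j<k. \<forall>j'<k. j < j' \<longrightarrow> pos i j < pos i j') \<and>
        (\<forall>i<m. \<forall>i'<m. \<forall>j<k. \<forall>j'<k. i < i' \<longrightarrow> pos i j < pos i' j')"
  proof (rule Suc.IH)
    show "finite (L - {c0})" using Suc.prems(1) by simp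
    show "m \<le> card (L - {c0})" using Suc.prems(2) c0(1) by simp
    show "\<forall>c\<in>L - {c0}. m * k \<le> card {x. Suc t \<le> x \<and> x < n \<and> q x = c}" using rest by blast
  qed
  then obtain h' pos' where h': "inj_on h' {0..<m}" "h' ` {0..<m} \<subseteq> L - {c0}"
    "\<forall>i<m. \<forall>j<k. Suc t \<le> pos' i j \<and> pos' i j < n \<and> q (pos' i j) = h' i"
    "\<forall>i<m. \<forall>j<k. \<forall>j'<k. j < j' \<longrightarrow> pos' i j < pos' i j'"
    "\<forall>i<m. \<forall>i'<m. \<forall>j<k. \<forall>j'<k. i < i' \<longrightarrow> pos' i j < pos' i' j'"
    by (elim exE conjE) (rule that, assumption+)
  have "\<exists>xs. sorted_wrt (<) xs \<and> set xs = S t c0"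
    using ex1_sorted_list_for_set_if_finite[OF finS[of t c0]] by (rule ex1_implies_ex)
  then obtain xs where xs: "sorted_wrt (<) xs" "set xs = S t c0"
    by (elim exE conjE) (rule that, assumption+)
  have "distinct xs" using xs(1) by (simp add: strict_sorted_iff)
  hence lenxs: "length xs = card (S t c0)" using distinct_card[OF \<open>distinct xs\<close>] xs(2) by simp
  have xsin: "xs ! j \<in> S t c0" if "j < k" for j
  proof -
    have "j < length xs" using that c0(2) lenxs by simp
    hence "xs ! j \<in> set xs" by (rule nth_mem)
    thus ?thesis using xs(2) by simp
  qed
  define h where "h i = (if i = 0 then c0 else h' (i - 1))" for i
  define pos where "pos i j = (if i = 0 then xs ! j else pos' (i - 1) j)" for i j
  show ?case
  proof (intro exI[of _ h] exI[of _ pos] conjI)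
    show "inj_on h {0..<Suc m}"
    proof (rule inj_onI)
      fix i i' assume hi: "i \<in> {0..<Suc m}" "i' \<in> {0..<Suc m}" "h i = h i'"
      show "i = i'"
      proof (cases "i = 0"; cases "i' = 0")
        assume "i \<noteq> 0" "i' \<noteq> 0"
        hence "h' (i - 1) = h' (i' - 1)" using hi(3) unfolding h_def by simp
        hence "i - 1 = i' - 1" using h'(1) hi \<open>i \<noteq> 0\<close> \<open>i' \<noteq> 0\<close> by (auto simp: inj_on_def)
        thus ?thesis using \<open>i \<noteq> 0\<close> \<open>i' \<noteq> 0\<close> by simp
      next
        assume "i = 0" "i' \<noteq> 0"
        hence "h' (i' - 1) = c0" using hi(3) unfolding h_def by simp
        moreover have "h' (i' - 1) \<in> L - {c0}" using h'(2) hi(2) \<open>i' \<noteq> 0\<close> by (auto simp: image_subset_iff)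
        ultimately show ?thesis by simp
      next
        assume "i \<noteq> 0" "i' = 0"
        hence "h' (i - 1) = c0" using hi(3) unfolding h_def by simp
        moreover have "h' (i - 1) \<in> L - {c0}" using h'(2) hi(1) \<open>i \<noteq> 0\<close> by (auto simp: image_subset_iff)
        ultimately show ?thesis by simp
      qed simp
    qed
    show "h ` {0..<Suc m} \<subseteq> L"
    proof
      fix y assume "y \<in> h ` {0..<Suc m}"
      then obtain i where i: "i < Suc m" "y = h i" by auto
      show "y \<in> L"
      proof (cases "i = 0")
        case True then show ?thesis using i c0 unfolding h_def by simp
      next
        case False then show ?thesis using i h'(2) unfolding h_def by (auto simp: image_subset_iff)
      qed
    qed
    show "\<forall>i<Suc m. \<forall>j<k. a \<le> pos i j \<and> pos i j < n \<and> q (pos i j) = h i"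
    proof (intro allI impI)
      fix i j assume i: "i < Suc m" and j: "j < k"
      show "a \<le> pos i j \<and> pos i j < n \<and> q (pos i j) = h i"
      proof (cases "i = 0")
        case True then show ?thesis using xsin[OF j] unfolding pos_def h_def S_def by simp
      next
        case False
        hence "i - 1 < m" using i by simp
        then show ?thesis using h'(3) j at False unfolding pos_def h_def by fastforce
      qed
    qed
    show "\<forall>i<Suc m. \<forall>j<k. \<forall>j'<k. j < j' \<longrightarrow> pos i j < pos i j'"
    proof (intro allI impI)
      fix i j j' assume i: "i < Suc m" and j: "j < k" "j' < k" "j < j'"
      show "pos i j < pos i j'"
      proof (cases "i = 0")
        case True
        have "j' < length xs" using j c0(2) lenxs by simp
        then show ?thesis using True sorted_wrt_nth_less[OF xs(1) j(3)] unfolding pos_def by simp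
      next
        case False
        hence "i - 1 < m" using i by simp
        then show ?thesis using h'(4) j False unfolding pos_def by simp
      qed
    qed
    show "\<forall>i<Suc m. \<forall>i'<Suc m. \<forall>j<k. \<forall>j'<k. i < i' \<longrightarrow> pos i j < pos i' j'"
    proof (intro allI impI)
      fix i i' j j' assume i: "i < Suc m" "i' < Suc m" and j: "j < k" "j' < k" and ii: "i < i'"
      show "pos i j < pos i' j'"
      proof (cases "i = 0")
        case True
        have "pos i j \<le> t" using True xsin[OF j(1)] unfolding pos_def S_def by simp
        moreover have "Suc t \<le> pos i' j'" using ii True h'(3) i(2) j(2) unfolding pos_def by simp
        ultimately show ?thesis by simp
      next
        case False
        hence "i - 1 < i' - 1" "i' - 1 < m" using i ii by auto
        then show ?thesis using h'(5) j False ii unfolding pos_def by auto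
      qed
    qed
  qed
qed


lemma card_img_ge1: "card (col ` {0..(u::nat)}) \<ge> 1"
proof -
  have "col ` {0..u} \<noteq> {}" "finite (col ` {0..u})" by auto
  hence "0 < card (col ` {0..u})" by (simp add: card_gt_0_iff)
  thus ?thesis by simp
qed

lemma embed:
  assumes ct: "contains_turan n l E" and pic: "proper_interval_coloring k EF m col"
    and ml: "m \<le> l" and k: "k \<ge> 1" and big: "m * k \<le> n div l"
  shows "contains_ordered n E k EF"
proof -
  obtain p f where pf: "\<forall>i<n. p i < l"
    "\<forall>j<l. card {i. i < n \<and> p i = j} \<in> {n div l, (n + l - 1) div l}"
    "inj_on f {0..<n}" "f ` {0..<n} \<subseteq> {0..<n}"
    "\<forall>u<n. \<forall>v<n. p u \<noteq> p v \<longrightarrow> E (f u) (f v)"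
    using ct unfolding contains_turan_def by (elim exE conjE) (rule that, assumption+)
  have fs: "f ` {0..<n} = {0..<n}" using pf(3,4) by (intro endo_inj_surj) auto
  define q where "q x = p (inv_into {0..<n} f x)" for x
  have inv: "inv_into {0..<n} f x < n \<and> f (inv_into {0..<n} f x) = x" if "x < n" for x
    using that fs by (metis atLeastLessThan_iff f_inv_into_f inv_into_into zero_le)
  have qE: "E x y" if "x < n" "y < n" "q x \<noteq> q y" for x y
    using pf(5) inv[OF that(1)] inv[OF that(2)] that(3) unfolding q_def by metis
  have cnt: "m * k \<le> card {x. 0 \<le> x \<and> x < n \<and> q x = c}" if "c \<in> {0..<l}" for c
  proof -
    have eq: "{x. 0 \<le> x \<and> x < n \<and> q x = c} = f ` {i. i < n \<and> p i = c}"
    proof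
      show "{x. 0 \<le> x \<and> x < n \<and> q x = c} \<subseteq> f ` {i. i < n \<and> p i = c}"
      proof
        fix x assume "x \<in> {x. 0 \<le> x \<and> x < n \<and> q x = c}"
        hence x: "x < n" "q x = c" by auto
        show "x \<in> f ` {i. i < n \<and> p i = c}"
          using inv[OF x(1)] x(2) unfolding q_def by (metis (mono_tags, lifting) image_eqI mem_Collect_eq)
      qed
      show "f ` {i. i < n \<and> p i = c} \<subseteq> {x. 0 \<le> x \<and> x < n \<and> q x = c}"
      proof
        fix x assume "x \<in> f ` {i. i < n \<and> p i = c}"
        then obtain i where i: "i < n" "p i = c" "x = f i" by auto
        have "x < n" using i pf(4) by (auto simp: image_subset_iff)
        moreover have "inv_into {0..<n} f x = i" using i pf(3) by (simp add: inv_into_f_f)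
        ultimately show "x \<in> {x. 0 \<le> x \<and> x < n \<and> q x = c}" unfolding q_def using i by simp
      qed
    qed
    have "card (f ` {i. i < n \<and> p i = c}) = card {i. i < n \<and> p i = c}"
      by (rule card_image) (rule inj_on_subset[OF pf(3)], auto)
    moreover have "n div l \<le> card {i. i < n \<and> p i = c}"
    proof -
      have "n div l \<le> (n + l - 1) div l" using that by (intro div_le_mono) simp
      thus ?thesis using pf(2) that by auto
    qed
    ultimately show ?thesis unfolding eq using big by linarith
  qed
  have "\<exists>h pos. inj_on h {0..<m} \<and> h ` {0..<m} \<subseteq> {0..<l} \<and>
        (\<forall>i<m. \<forall>j<k. 0 \<le> pos i j \<and> pos i j < n \<and> q (pos i j) = h i) \<and>
        (\<forall>i<m. \<forall>j<k. \<forall>j'<k. j < j' \<longrightarrow> pos i j < pos i j') \<and>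
        (\<forall>i<m. \<forall>i'<m. \<forall>j<k. \<forall>j'<k. i < i' \<longrightarrow> pos i j < pos i' j')"
    by (rule core[OF k]) (use ml cnt in auto)
  then obtain h pos where hp: "inj_on h {0..<m}"
    "\<forall>i<m. \<forall>j<k. 0 \<le> pos i j \<and> pos i j < n \<and> q (pos i j) = h i"
    "\<forall>i<m. \<forall>j<k. \<forall>j'<k. j < j' \<longrightarrow> pos i j < pos i j'"
    "\<forall>i<m. \<forall>i'<m. \<forall>j<k. \<forall>j'<k. i < i' \<longrightarrow> pos i j < pos i' j'"
    by (elim exE conjE) (rule that, assumption+)
  have colr: "\<forall>i<k. col i \<in> {1..m}"
    and colE: "\<forall>u<k. \<forall>v<k. EF u v \<longrightarrow> col u \<noteq> col v"
    and colI: "\<forall>u v w. u < v \<and> v < w \<and> w < k \<and> col u = col w \<longrightarrow> col v = col u"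
    using pic unfolding proper_interval_coloring_def by blast+
  define b where "b u = card (col ` {0..u}) - 1" for u
  have bm: "b u < m" if "u < k" for u
  proof -
    have "col ` {0..u} \<subseteq> {1..m}" using colr that by auto
    hence "card (col ` {0..u}) \<le> m" using card_mono[of "{1..m}"] by fastforce
    moreover have "card (col ` {0..u}) \<ge> 1" by (rule card_img_ge1)
    ultimately show ?thesis unfolding b_def by linarith
  qed
  have bmono: "b u \<le> b v" if "u \<le> v" for u v
  proof -
    have "col ` {0..u} \<subseteq> col ` {0..v}" using that by auto
    hence "card (col ` {0..u}) \<le> card (col ` {0..v})" by (intro card_mono) auto
    thus ?thesis unfolding b_def by simp
  qed
  have beq: "col u = col v" if "u < v" "v < k" "b u = b v" for u v
  proof -
    have sub: "col ` {0..u} \<subseteq> col ` {0..v}" using that by auto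
    have c1: "card (col ` {0..u}) \<ge> 1" "card (col ` {0..v}) \<ge> 1"
      by (rule card_img_ge1)+
    hence "card (col ` {0..u}) = card (col ` {0..v})" using that(3) unfolding b_def by linarith
    hence "col ` {0..u} = col ` {0..v}" using sub by (intro card_subset_eq) auto
    moreover have "col v \<in> col ` {0..v}" by (intro imageI) simp
    ultimately have "col v \<in> col ` {0..u}" by simp
    then obtain w where w: "w \<le> u" "col w = col v" by (auto simp: image_iff)
    show ?thesis
    proof (cases "w = u")
      case True then show ?thesis using w by simp
    next
      case False
      hence "w < u" using w by simp
      then show ?thesis using colI that w by metis
    qed
  qed
  define g where "g u = pos (b u) u" for u
  show ?thesis
    unfolding contains_ordered_def
  proof (intro exI[of _ g] conjI)
    show "strict_mono_on {0..<k} g"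
    proof (rule strict_mono_onI)
      fix u v assume uv: "u \<in> {0..<k}" "v \<in> {0..<k}" "u < v"
      have "b u \<le> b v" using uv bmono by simp
      moreover have "b u < m" "b v < m" using uv bm by auto
      ultimately show "g u < g v"
        using hp(3) hp(4) uv unfolding g_def by (cases "b u = b v") auto
    qed
    show "g ` {0..<k} \<subseteq> {0..<n}" using hp(2) bm unfolding g_def by (auto simp: image_subset_iff)
    show "\<forall>u<k. \<forall>v<k. EF u v \<longrightarrow> E (g u) (g v)"
    proof (intro allI impI)
      fix u v assume uv: "u < k" "v < k" "EF u v"
      have cne: "col u \<noteq> col v" using colE uv by blast
      have "b u \<noteq> b v"
      proof
        assume "b u = b v"
        moreover have "u \<noteq> v" using cne by auto
        ultimately show False using beq[of u v] beq[of v u] uv cne by (cases "u < v") auto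
      qed
      hence "h (b u) \<noteq> h (b v)" using hp(1) bm uv by (auto simp: inj_on_def)
      moreover have "q (g u) = h (b u)" "q (g v) = h (b v)" "g u < n" "g v < n"
        using hp(2) bm uv unfolding g_def by auto
      ultimately show "E (g u) (g v)" using qE by metis
    qed
  qed
qed


lemma icn_coloring:
  assumes "ordered_graph k EF"
  shows "\<exists>col. proper_interval_coloring k EF (interval_chromatic_number k EF) col"
proof -
  have "proper_interval_coloring k EF k (\<lambda>i. i + 1)"
    using assms unfolding proper_interval_coloring_def ordered_graph_def by auto
  hence "\<exists>l col. proper_interval_coloring k EF l col" by blast
  thus ?thesis unfolding interval_chromatic_number_def by (rule LeastI_ex)
qed

lemma icn_le:
  assumes "proper_interval_coloring k EF l col"
  shows "interval_chromatic_number k EF \<le> l"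
  unfolding interval_chromatic_number_def using assms by (intro Least_le) blast

lemma in_S:
  assumes l: "l \<ge> 1" and big: "\<forall>(k, EF) \<in> \<F>. interval_chromatic_number k EF > l"
  shows "\<forall>n. \<exists>E. forb_model \<F> n E \<and> contains_turan n l E"
proof
  fix n
  obtain E where E: "ordered_graph n E" "contains_turan n l E"
    "\<forall>k EF. contains_ordered n E k EF \<longrightarrow> (\<exists>col. proper_interval_coloring k EF l col)"
    using turan_model[OF l, of n] by (elim exE conjE) (rule that, assumption+)
  have "\<forall>(k, EF) \<in> \<F>. \<not> contains_ordered n E k EF"
  proof (intro ballI)
    fix F assume F: "F \<in> \<F>"
    obtain k EF where F': "F = (k, EF)" by (cases F)
    have "\<not> contains_ordered n E k EF"
    proof
      assume "contains_ordered n E k EF"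
      then obtain col where "proper_interval_coloring k EF l col" using E(3) by blast
      hence "interval_chromatic_number k EF \<le> l" by (rule icn_le)
      moreover have "interval_chromatic_number k EF > l" using big F F' by auto
      ultimately show False by simp
    qed
    thus "case F of (k, EF) \<Rightarrow> \<not> contains_ordered n E k EF" using F' by simp
  qed
  thus "\<exists>E. forb_model \<F> n E \<and> contains_turan n l E"
    using E unfolding forb_model_def by blast
qed

lemma not_in_S:
  assumes F0: "(k0, E0) \<in> \<F>" and og: "ordered_graph k0 E0" and l: "l \<ge> 1"
    and ge: "l \<ge> interval_chromatic_number k0 E0"
  shows "\<not> (\<forall>n. \<exists>E. forb_model \<F> n E \<and> contains_turan n l E)"
proof
  assume A: "\<forall>n. \<exists>E. forb_model \<F> n E \<and> contains_turan n l E"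
  define m where "m = interval_chromatic_number k0 E0"
  obtain col where col: "proper_interval_coloring k0 E0 m col"
    using icn_coloring[OF og] unfolding m_def by blast
  define n where "n = l * (m * k0)"
  obtain E where E: "forb_model \<F> n E" "contains_turan n l E" using A by blast
  have "contains_ordered n E k0 E0"
  proof (cases "k0 = 0")
    case True
    show ?thesis unfolding contains_ordered_def True
      by (intro exI[of _ id]) (auto simp: strict_mono_on_def)
  next
    case False
    show ?thesis
    proof (rule embed[OF E(2) col])
      show "m \<le> l" using ge unfolding m_def .
      show "1 \<le> k0" using False by simp
      show "m * k0 \<le> n div l" unfolding n_def using l by simp
    qed
  qed
  moreover have "\<not> contains_ordered n E k0 E0" using E(1) F0 unfolding forb_model_def by blast
  ultimately show False by simp
qed

theorem proposition8p2:
  fixes \<F> :: "(nat \<times> (nat \<Rightarrow> nat \<Rightarrow> bool)) set"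
  assumes "\<forall>(k, EF) \<in> \<F>. ordered_graph k EF"
  shows "chi_interp \<F> = max (interval_chromatic_family \<F>) 1"
proof -
  define S where "S = {enat l | l. l \<ge> 1 \<and> (\<forall>n. \<exists>E. forb_model \<F> n E \<and> contains_turan n l E)}"
  have chi: "chi_interp \<F> = Sup (S \<union> {0}) + 1" unfolding chi_interp_def S_def ..
  show ?thesis
  proof (cases "\<F> = {}")
    case True
    have icf: "interval_chromatic_family \<F> = \<infinity>"
      unfolding interval_chromatic_family_def True by (simp add: top_enat_def)
    have inS: "enat l \<in> S" if "l \<ge> 1" for l
      unfolding S_def using in_S[of l \<F>] that True by auto
    have "Sup (S \<union> {0}) = \<infinity>"
    proof (rule ccontr)
      assume "Sup (S \<union> {0}) \<noteq> \<infinity>"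
      then obtain s where s: "Sup (S \<union> {0}) = enat s" by (cases "Sup (S \<union> {0})") auto
      have "enat (s + 1) \<le> Sup (S \<union> {0})" using inS[of "s+1"] by (intro Sup_upper) auto
      thus False unfolding s by simp
    qed
    thus ?thesis unfolding chi icf by simp
  next
    case False
    define V where "V = (\<lambda>F. enat (interval_chromatic_number (fst F) (snd F))) ` \<F>"
    have icfV: "interval_chromatic_family \<F> = Inf V" unfolding interval_chromatic_family_def V_def ..
    have "V \<noteq> {}" using False unfolding V_def by auto
    hence "Inf V \<in> V" unfolding Inf_enat_def using LeastI_ex[of "\<lambda>x. x \<in> V"] by auto
    then obtain k0 E0 where F0: "(k0, E0) \<in> \<F>" and icf0: "Inf V = enat (interval_chromatic_number k0 E0)"
      unfolding V_def by auto
    define m where "m = interval_chromatic_number k0 E0"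
    have minm: "m \<le> interval_chromatic_number k EF" if "(k, EF) \<in> \<F>" for k EF
    proof -
      have "Inf V \<le> enat (interval_chromatic_number k EF)"
        using that unfolding V_def by (intro Inf_lower) force
      thus ?thesis unfolding icf0 m_def by simp
    qed
    have og0: "ordered_graph k0 E0" using assms F0 by blast
    have Sup_eq: "Sup (S \<union> {0}) = enat (m - 1)"
    proof (rule antisym)
      show "Sup (S \<union> {0}) \<le> enat (m - 1)"
      proof (rule Sup_least)
        fix x assume "x \<in> S \<union> {0}"
        then consider "x = 0" | l where "x = enat l" "l \<ge> 1"
          "\<forall>n. \<exists>E. forb_model \<F> n E \<and> contains_turan n l E"
          unfolding S_def by blast
        then show "x \<le> enat (m - 1)"
        proof cases
          case 1 then show ?thesis by (simp add: zero_enat_def)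
        next
          case 2
          have "\<not> l \<ge> m" using not_in_S[OF F0 og0 2(2)] 2(3) unfolding m_def by blast
          then show ?thesis using 2(1) by simp
        qed
      qed
      show "enat (m - 1) \<le> Sup (S \<union> {0})"
      proof (cases "m \<ge> 2")
        case True
        have "\<forall>(k, EF) \<in> \<F>. interval_chromatic_number k EF > m - 1"
          using minm True by fastforce
        hence "enat (m - 1) \<in> S" unfolding S_def using in_S[of "m - 1" \<F>] True by auto
        then show ?thesis by (intro Sup_upper) auto
      next
        case False
        hence "enat (m - 1) = 0" by (simp add: zero_enat_def)
        then show ?thesis by (intro Sup_upper) auto
      qed
    qed
    have "max (interval_chromatic_family \<F>) 1 = enat (max m 1)"
      unfolding icfV icf0 m_def by (simp add: one_enat_def)
    moreover have "enat (m - 1) + 1 = enat (max m 1)" by (simp add: one_enat_def)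
    ultimately show ?thesis unfolding chi Sup_eq by simp
  qed
qed

end
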